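(* Let $X\in\mathbb{R}^{n\times p}$ have unit $\ell_2$-norm columns and worst-case coherence $\mu>0$, let $\beta\in\mathbb{R}^p$ be $k$-sparse with support $\mathcal{S}$, let $\eta\in\mathbb{R}^n$ have independent $\mathcal{N}(0,\sigma^2)$ entries, and $y=X\beta+\eta$. Suppose $k<\mu^{-1}$ and $$\frac{\beta_{\min}}{\|\beta\|_2}>2\mu\sqrt{k}+\frac{4\sqrt{\sigma^2\log p}}{\|\beta\|_2}.$$ Then, with probability exceeding $1-2\big(p\sqrt{2\pi\log p}\big)^{-1}$, the output $\hat{\mathcal{S}}$ of Algorithm 1 satisfies $\mathcal{S}\subset\hat{\mathcal{S}}$ for every integer $d\le p$ with $$d\ge\left\lceil\frac{\sqrt{k}}{\frac{\beta_{\min}}{\|\beta\|_2}-2\mu\sqrt{k}-\frac{4\sqrt{\sigma^2\log p}}{\|\beta\|_2}}\right\rceil.$$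
   Context: Worst-case coherence of $X$ with unit-norm columns $X_1,\dots,X_p$: $\mu=\max_{i\ne j}|X_i^\top X_j|$. $[[p]]=\{1,\dots,p\}$, $p\ge2$, $k<n$, $\sigma>0$. $\beta$ (deterministic) is $k$-sparse with support $\mathcal{S}=\{i:\beta_i\ne0\}$, $|\mathcal{S}|=k$; $\beta_{\min}=\min_{i\in\mathcal{S}}|\beta_i|$. Algorithm 1: given $X$, $y$ and an integer $d\in\{1,\dots,p\}$, compute $w=X^\top y$ and output $\hat{\mathcal{S}}\subset[[p]]$ with $|\hat{\mathcal{S}}|=d$ such that $|w_i|\ge|w_j|$ for all $i\in\hat{\mathcal{S}}$, $j\notin\hat{\mathcal{S}}$ (ties broken arbitrarily). *)

theory Defs
  imports "HOL-Probability.Probability"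
begin

text \<open>Matrices X in R^{n x p} are represented as X :: nat => nat => real with entry X i j
  for row i < n and column j < p (columns indexed 0..p-1 instead of 1..p).
  Vectors in R^n / R^p are functions nat => real used on {..<n} / {..<p}.\<close>

definition col_inner :: "nat \<Rightarrow> (nat \<Rightarrow> nat \<Rightarrow> real) \<Rightarrow> nat \<Rightarrow> nat \<Rightarrow> real" where
  "col_inner n X a b = (\<Sum>i<n. X i a * X i b)"

definition coherence :: "nat \<Rightarrow> nat \<Rightarrow> (nat \<Rightarrow> nat \<Rightarrow> real) \<Rightarrow> real" where
  "coherence n p X = Max {\<bar>col_inner n X a b\<bar> | a b. a < p \<and> b < p \<and> a \<noteq> b}"

definition matvec :: "nat \<Rightarrow> (nat \<Rightarrow> nat \<Rightarrow> real) \<Rightarrow> (nat \<Rightarrow> real) \<Rightarrow> nat \<Rightarrow> real" where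
  "matvec p X b i = (\<Sum>j<p. X i j * b j)"

definition tmatvec :: "nat \<Rightarrow> (nat \<Rightarrow> nat \<Rightarrow> real) \<Rightarrow> (nat \<Rightarrow> real) \<Rightarrow> nat \<Rightarrow> real" where
  "tmatvec n X y j = (\<Sum>i<n. X i j * y i)"

text \<open>Algorithm 1: Shat is a valid output (for some tie-breaking) given X, y and d.\<close>
definition alg1_output :: "nat \<Rightarrow> nat \<Rightarrow> (nat \<Rightarrow> nat \<Rightarrow> real) \<Rightarrow> (nat \<Rightarrow> real) \<Rightarrow> nat \<Rightarrow> nat set \<Rightarrow> bool" where
  "alg1_output n p X y d Shat \<longleftrightarrow>
     (let w = tmatvec n X y in
       Shat \<subseteq> {..<p} \<and> card Shat = d \<and>
       (\<forall>i\<in>Shat. \<forall>j\<in>{..<p} - Shat. \<bar>w i\<bar> \<ge> \<bar>w j\<bar>))"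

definition gauss_noise :: "nat \<Rightarrow> real \<Rightarrow> (nat \<Rightarrow> real) measure" where
  "gauss_noise n \<sigma> = PiM {..<n} (\<lambda>_. density lborel (normal_density 0 \<sigma>))"

definition l2norm :: "nat \<Rightarrow> (nat \<Rightarrow> real) \<Rightarrow> real" where
  "l2norm p b = sqrt (\<Sum>j<p. (b j)\<^sup>2)"

end

theory Submission
  imports Defs "HOL-Real_Asymp.Real_Asymp"
begin


lemma normal_tail_emeasure:
  fixes \<sigma> t :: real
  assumes s: "\<sigma> > 0" and t: "t > 0"
  shows "emeasure (density lborel (normal_density 0 \<sigma>)) {t..} \<le> ennreal (\<sigma>\<^sup>2 / t * normal_density 0 \<sigma> t)"
proof -
  let ?nd = "normal_density 0 \<sigma>"
  define F where "F x = - (\<sigma>\<^sup>2 / t) * ?nd x" for x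
  have der: "DERIV F x :> x * ?nd x / t" for x
  proof -
    have "DERIV F x :> - (\<sigma>\<^sup>2 / t) * (1 / sqrt (2 * pi * \<sigma>\<^sup>2) * (exp (-(x - 0)\<^sup>2/ (2 * \<sigma>\<^sup>2)) * (- (2 * (x - 0)) / (2 * \<sigma>\<^sup>2))))"
      unfolding F_def normal_density_def using s t
      by (auto intro!: derivative_eq_intros)
    moreover have "- (\<sigma>\<^sup>2 / t) * (1 / sqrt (2 * pi * \<sigma>\<^sup>2) * (exp (-(x - 0)\<^sup>2/ (2 * \<sigma>\<^sup>2)) * (- (2 * (x - 0)) / (2 * \<sigma>\<^sup>2)))) = x * ?nd x / t"
      using s by (simp add: normal_density_def field_simps power2_eq_square)
    ultimately show ?thesis by simp
  qed
  have lim0: "((\<lambda>x::real. - (x\<^sup>2) / (2 * \<sigma>\<^sup>2)) \<longlongrightarrow> 0) at_top \<or> True" by simp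
  have lim1: "filterlim (\<lambda>x::real. - (x\<^sup>2) / (2 * \<sigma>\<^sup>2)) at_bot at_top"
    using s by real_asymp
  have "((\<lambda>x. exp (- (x\<^sup>2) / (2 * \<sigma>\<^sup>2))) \<longlongrightarrow> 0) at_top"
    by (rule filterlim_compose[OF exp_at_bot lim1])
  then have "((\<lambda>x. (- (\<sigma>\<^sup>2 / t) * (1 / sqrt (2 * pi * \<sigma>\<^sup>2))) * exp (- (x\<^sup>2) / (2 * \<sigma>\<^sup>2))) \<longlongrightarrow> 0) at_top"
    by (rule tendsto_mult_right_zero)
  then have lim: "(F \<longlongrightarrow> 0) at_top"
    unfolding F_def normal_density_def by (simp add: mult.assoc)
  have "emeasure (density lborel ?nd) {t..} = (\<integral>\<^sup>+x. ennreal (?nd x) * indicator {t..} x \<partial>lborel)"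
    by (simp add: emeasure_density)
  also have "\<dots> \<le> (\<integral>\<^sup>+x. ennreal (x * ?nd x / t) * indicator {t..} x \<partial>lborel)"
  proof (intro nn_integral_mono)
    fix x :: real
    show "ennreal (?nd x) * indicator {t..} x \<le> ennreal (x * ?nd x / t) * indicator {t..} x"
    proof (cases "t \<le> x")
      case True
      have "?nd x \<le> x * ?nd x / t"
        using True t by (simp add: field_simps mult_right_mono)
      then show ?thesis using True by (simp add: indicator_def ennreal_leI)
    qed (simp add: indicator_def)
  qed
  also have "\<dots> = ennreal (0 - F t)"
    by (rule nn_integral_FTC_atLeast[OF _ der _ lim]) (use t in \<open>auto simp: normal_density_def\<close>)
  also have "0 - F t = \<sigma>\<^sup>2 / t * ?nd t" by (simp add: F_def)
  finally show ?thesis .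
qed

lemma gauss_lin:
  fixes c :: "nat \<Rightarrow> real"
  assumes s: "\<sigma> > 0" and c: "(\<Sum>i<n. (c i)\<^sup>2) = 1"
  shows "distributed (gauss_noise n \<sigma>) lborel (\<lambda>\<eta>. \<Sum>i<n. c i * \<eta> i) (normal_density 0 \<sigma>)"
proof -
  define N where "N = density lborel (\<lambda>x. ennreal (normal_density 0 \<sigma> x))"
  define M where "M = gauss_noise n \<sigma>"
  have MN: "M = PiM {..<n} (\<lambda>_. N)" using s by (simp add: M_def N_def gauss_noise_def)
  have pN: "prob_space N" unfolding N_def by (rule prob_space_normal_density[OF s])
  interpret prob_space M unfolding MN by (rule prob_space_PiM) (use pN in auto)
  have setsN: "sets N = sets borel" by (simp add: N_def)
  have meas_i: "(\<lambda>x. x i) \<in> measurable M borel" if "i < n" for i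
  proof -
    have "(\<lambda>x. x i) \<in> measurable M N" unfolding MN by (rule measurable_component_singleton) (use that in simp)
    then show ?thesis using setsN by (simp add: measurable_def space_borel)
  qed
  have distr_i: "distr M borel (\<lambda>x. x i) = N" if "i < n" for i
  proof -
    have "distr M borel (\<lambda>x. x i) = distr M N (\<lambda>x. x i)"
      by (rule distr_cong) (simp_all add: setsN)
    also have "\<dots> = N" unfolding MN by (rule distr_PiM_component) (use pN that in auto)
    finally show ?thesis .
  qed
  have dist_i: "distributed M lborel (\<lambda>x. x i) (normal_density 0 \<sigma>)" if "i < n" for i
  proof -
    have "distr M lborel (\<lambda>x. x i) = distr M borel (\<lambda>x. x i)"
      by (rule distr_cong) simp_all
    then show ?thesis unfolding distributed_def using distr_i[OF that] meas_i[OF that]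
      by (simp add: N_def)
  qed
  have "n \<noteq> 0" using c by (cases n) auto
  have indep: "indep_vars (\<lambda>_. borel) (\<lambda>i x. x i) {..<n}"
  proof (subst indep_vars_iff_distr_eq_PiM')
    show "{..<n} \<noteq> {}" using \<open>n \<noteq> 0\<close> by auto
    show "random_variable borel (\<lambda>x. x i)" if "i \<in> {..<n}" for i using meas_i that by simp
    have "distr M (Pi\<^sub>M {..<n} (\<lambda>_. borel)) (\<lambda>x. restrict x {..<n}) = distr M M (\<lambda>x. x)"
      by (rule distr_cong) (auto simp: MN setsN intro!: sets_PiM_cong simp: space_PiM)
    also have "\<dots> = M" by (rule distr_id)
    also have "\<dots> = (Pi\<^sub>M {..<n} (\<lambda>i. distr M borel (\<lambda>x. x i)))"
      unfolding MN by (intro PiM_cong) (auto simp: distr_i[unfolded MN])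
    finally show "distr M (Pi\<^sub>M {..<n} (\<lambda>_. borel)) (\<lambda>x. \<lambda>i\<in>{..<n}. x i) = (Pi\<^sub>M {..<n} (\<lambda>i. distr M borel (\<lambda>x. x i)))"
      by simp
  qed
  define J where "J = {i. i < n \<and> c i \<noteq> 0}"
  have finJ: "finite J" by (simp add: J_def)
  have sumJ: "(\<Sum>i\<in>J. f i) = (\<Sum>i<n. f i)" if "\<And>i. c i = 0 \<Longrightarrow> f i = 0" for f :: "nat \<Rightarrow> real"
    by (rule sum.mono_neutral_left) (auto simp: J_def that)
  have "J \<noteq> {}"
  proof
    assume "J = {}"
    then have "(\<Sum>i<n. (c i)\<^sup>2) = (\<Sum>i\<in>J. (c i)\<^sup>2)" using sumJ[of "\<lambda>i. (c i)\<^sup>2"] by simp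
    then show False using c \<open>J = {}\<close> by simp
  qed
  have indJ: "indep_vars (\<lambda>_. borel) (\<lambda>i x. c i * x i) J"
    by (rule indep_vars_compose2[where X="\<lambda>i x. x i", OF indep_vars_subset[OF indep]])
      (auto simp: J_def)
  have dJ: "distributed M lborel (\<lambda>x. c i * x i) (normal_density 0 (\<bar>c i\<bar> * \<sigma>))" if "i \<in> J" for i
  proof -
    from that have i: "i < n" "c i \<noteq> 0" by (auto simp: J_def)
    show ?thesis using normal_density_affine[OF dist_i[OF i(1)] s i(2), where \<beta>=0] by simp
  qed
  have "distributed M lborel (\<lambda>x. \<Sum>i\<in>J. c i * x i)
      (normal_density (\<Sum>i\<in>J. 0) (sqrt (\<Sum>i\<in>J. (\<bar>c i\<bar> * \<sigma>)\<^sup>2)))"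
    by (rule sum_indep_normal[OF finJ \<open>J \<noteq> {}\<close> indJ _ dJ]) (use s in \<open>auto simp: J_def\<close>)
  moreover have "(\<Sum>i\<in>J. (\<bar>c i\<bar> * \<sigma>)\<^sup>2) = \<sigma>\<^sup>2"
  proof -
    have "(\<Sum>i\<in>J. (\<bar>c i\<bar> * \<sigma>)\<^sup>2) = (\<Sum>i<n. (\<bar>c i\<bar> * \<sigma>)\<^sup>2)" by (rule sumJ) simp
    also have "\<dots> = \<sigma>\<^sup>2 * (\<Sum>i<n. (c i)\<^sup>2)" by (simp add: sum_distrib_left power_mult_distrib mult.commute)
    finally show ?thesis using c by simp
  qed
  moreover have "(\<lambda>x. \<Sum>i\<in>J. c i * x i) = (\<lambda>x. \<Sum>i<n. c i * x i)"
    by (rule ext, rule sumJ) simp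
  ultimately show ?thesis using s by (simp add: M_def)
qed


lemma normal_tail_measure:
  fixes \<sigma> t :: real
  assumes s: "\<sigma> > 0" and t: "t > 0"
  shows "measure (density lborel (normal_density 0 \<sigma>)) {t..} \<le> \<sigma>\<^sup>2 / t * normal_density 0 \<sigma> t"
proof -
  have "0 \<le> \<sigma>\<^sup>2 / t * normal_density 0 \<sigma> t" using t by simp
  then show ?thesis using normal_tail_emeasure[OF s t]
    by (simp add: measure_def enn2real_leI)
qed

lemma tail_one:
  assumes "prob_space M" and D: "distributed M lborel W (normal_density 0 \<sigma>)" and s: "\<sigma> > 0" and t: "t > 0"
  shows "measure M {x\<in>space M. W x \<ge> t} \<le> \<sigma>\<^sup>2 / t * normal_density 0 \<sigma> t"
proof -
  have Wm: "W \<in> measurable M lborel" using D by (simp add: distributed_def)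
  have "measure M {x\<in>space M. W x \<ge> t} = measure (distr M lborel W) {t..}"
    using Wm by (subst measure_distr) (auto intro!: arg_cong[where f="measure M"])
  also have "\<dots> = measure (density lborel (normal_density 0 \<sigma>)) {t..}"
    using D by (simp add: distributed_def)
  also have "\<dots> \<le> \<sigma>\<^sup>2 / t * normal_density 0 \<sigma> t" by (rule normal_tail_measure[OF s t])
  finally show ?thesis .
qed

lemma tail_two:
  assumes P: "prob_space M" and D: "distributed M lborel W (normal_density 0 \<sigma>)" and s: "\<sigma> > 0" and t: "t > 0"
  shows "measure M {x\<in>space M. \<bar>W x\<bar> > t} \<le> 2 * (\<sigma>\<^sup>2 / t * normal_density 0 \<sigma> t)"
proof -
  interpret prob_space M by (rule P)
  have D2: "distributed M lborel (\<lambda>x. 0 + (-1) * W x) (normal_density (0 + (-1) * 0) (\<bar>-1\<bar> * \<sigma>))"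
    by (rule normal_density_affine[OF D s]) simp
  have D2': "distributed M lborel (\<lambda>x. - W x) (normal_density 0 \<sigma>)" using D2 by simp
  have Wm[measurable]: "W \<in> borel_measurable M" using D by (simp add: distributed_def)
  have "measure M {x\<in>space M. \<bar>W x\<bar> > t} \<le> measure M ({x\<in>space M. W x \<ge> t} \<union> {x\<in>space M. - W x \<ge> t})"
    by (rule finite_measure_mono) auto
  also have "\<dots> \<le> measure M {x\<in>space M. W x \<ge> t} + measure M {x\<in>space M. - W x \<ge> t}"
    by (rule measure_Un_le) auto
  also have "\<dots> \<le> \<sigma>\<^sup>2 / t * normal_density 0 \<sigma> t + \<sigma>\<^sup>2 / t * normal_density 0 \<sigma> t"
    by (intro add_mono tail_one[OF P D s t] tail_one[OF P D2' s t])
  finally show ?thesis by (simp add: mult.commute)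
qed

lemma tmatvec_expand:
  "tmatvec n X (\<lambda>i. matvec p X \<beta> i + \<eta> i) j = (\<Sum>l<p. col_inner n X j l * \<beta> l) + tmatvec n X \<eta> j"
proof -
  have "tmatvec n X (\<lambda>i. matvec p X \<beta> i + \<eta> i) j = (\<Sum>i<n. \<Sum>l<p. X i j * X i l * \<beta> l) + tmatvec n X \<eta> j"
    by (simp add: tmatvec_def matvec_def distrib_left sum.distrib sum_distrib_left mult.assoc)
  also have "(\<Sum>i<n. \<Sum>l<p. X i j * X i l * \<beta> l) = (\<Sum>l<p. col_inner n X j l * \<beta> l)"
    by (subst sum.swap) (simp add: col_inner_def sum_distrib_right)
  finally show ?thesis .
qed

lemma signal_split:
  assumes j: "j < p" and unit: "(\<Sum>i<n. (X i j)\<^sup>2) = 1"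
    and coh: "\<forall>a<p. \<forall>b<p. a \<noteq> b \<longrightarrow> \<bar>col_inner n X a b\<bar> \<le> \<mu>" and mu: "\<mu> \<ge> 0"
  shows "\<bar>(\<Sum>l<p. col_inner n X j l * \<beta> l) - \<beta> j\<bar> \<le> \<mu> * (\<Sum>l<p. \<bar>\<beta> l\<bar>)"
proof -
  have cjj: "col_inner n X j j = 1" using unit by (simp add: col_inner_def power2_eq_square)
  have "(\<Sum>l<p. col_inner n X j l * \<beta> l) = col_inner n X j j * \<beta> j + (\<Sum>l\<in>{..<p}-{j}. col_inner n X j l * \<beta> l)"
    using j by (simp add: sum.remove)
  then have "(\<Sum>l<p. col_inner n X j l * \<beta> l) - \<beta> j = (\<Sum>l\<in>{..<p}-{j}. col_inner n X j l * \<beta> l)"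
    using cjj by simp
  also have "\<bar>\<dots>\<bar> \<le> (\<Sum>l\<in>{..<p}-{j}. \<bar>col_inner n X j l * \<beta> l\<bar>)" by (rule sum_abs)
  also have "\<dots> \<le> (\<Sum>l\<in>{..<p}-{j}. \<mu> * \<bar>\<beta> l\<bar>)"
    using coh j by (intro sum_mono) (auto simp: abs_mult intro!: mult_right_mono)
  also have "\<dots> \<le> (\<Sum>l<p. \<mu> * \<bar>\<beta> l\<bar>)"
    using mu by (intro sum_mono2) auto
  also have "\<dots> = \<mu> * (\<Sum>l<p. \<bar>\<beta> l\<bar>)" by (simp add: sum_distrib_left)
  finally show ?thesis .
qed

lemma separation:
  assumes unit: "\<forall>j<p. (\<Sum>i<n. (X i j)\<^sup>2) = 1"
    and coh: "\<forall>a<p. \<forall>b<p. a \<noteq> b \<longrightarrow> \<bar>col_inner n X a b\<bar> \<le> \<mu>" and mu: "\<mu> \<ge> 0"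
    and zero: "\<forall>j<p. j \<notin> S \<longrightarrow> \<beta> j = 0" and Sp: "S \<subseteq> {..<p}"
    and noise: "\<forall>j<p. \<bar>tmatvec n X \<eta> j\<bar> \<le> \<tau>"
    and gap: "bmin > 2 * \<mu> * (\<Sum>l<p. \<bar>\<beta> l\<bar>) + 2 * \<tau>"
    and bm: "\<forall>i\<in>S. bmin \<le> \<bar>\<beta> i\<bar>"
    and i: "i \<in> S" and j: "j < p" "j \<notin> S"
  shows "\<bar>tmatvec n X (\<lambda>i. matvec p X \<beta> i + \<eta> i) j\<bar> < \<bar>tmatvec n X (\<lambda>i. matvec p X \<beta> i + \<eta> i) i\<bar>"
proof -
  let ?B = "\<Sum>l<p. \<bar>\<beta> l\<bar>"
  have ip: "i < p" using i Sp by auto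
  have sj: "\<bar>(\<Sum>l<p. col_inner n X j l * \<beta> l) - \<beta> j\<bar> \<le> \<mu> * ?B"
    using j unit coh mu by (intro signal_split) auto
  have si: "\<bar>(\<Sum>l<p. col_inner n X i l * \<beta> l) - \<beta> i\<bar> \<le> \<mu> * ?B"
    using ip unit coh mu by (intro signal_split) auto
  have bj: "\<beta> j = 0" using zero j by auto
  have bi: "bmin \<le> \<bar>\<beta> i\<bar>" using bm i by auto
  have ej: "\<bar>tmatvec n X \<eta> j\<bar> \<le> \<tau>" using noise j by auto
  have ei: "\<bar>tmatvec n X \<eta> i\<bar> \<le> \<tau>" using noise ip by auto
  show ?thesis unfolding tmatvec_expand
    using sj si bj bi ej ei gap by arith
qed

lemma top_contains:
  fixes w :: "nat \<Rightarrow> real"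
  assumes sep: "\<forall>i\<in>S. \<forall>j<p. j \<notin> S \<longrightarrow> \<bar>w j\<bar> < \<bar>w i\<bar>"
    and Sp: "S \<subseteq> {..<p}" and Shp: "Shat \<subseteq> {..<p}" and cd: "card S \<le> card Shat"
    and top: "\<forall>i\<in>Shat. \<forall>j\<in>{..<p} - Shat. \<bar>w i\<bar> \<ge> \<bar>w j\<bar>"
  shows "S \<subseteq> Shat"
proof
  fix i assume iS: "i \<in> S"
  show "i \<in> Shat"
  proof (rule ccontr)
    assume nI: "i \<notin> Shat"
    have ip: "i < p" using iS Sp by auto
    have "Shat \<subseteq> S - {i}"
    proof
      fix l assume lS: "l \<in> Shat"
      have "\<bar>w l\<bar> \<ge> \<bar>w i\<bar>" using top lS nI ip by auto
      moreover have "l < p" using lS Shp by auto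
      ultimately have "l \<in> S" using sep iS by force
      then show "l \<in> S - {i}" using lS nI by auto
    qed
    moreover have "finite S" using Sp finite_subset by blast
    ultimately have "card Shat \<le> card (S - {i})" by (intro card_mono) auto
    also have "\<dots> < card S" using \<open>finite S\<close> iS by (rule card_Diff1_less)
    finally show False using cd by simp
  qed
qed






theorem theorem3:
  fixes n p k :: nat and X :: "nat \<Rightarrow> nat \<Rightarrow> real" and \<beta> :: "nat \<Rightarrow> real"
    and \<sigma> :: real and S :: "nat set"
  assumes p2: "p \<ge> 2" and kn: "k < n" and sigma_pos: "\<sigma> > 0"
    and unit_cols: "\<forall>j<p. (\<Sum>i<n. (X i j)\<^sup>2) = 1"
    and mu_pos: "coherence n p X > 0"
    and beta_dom: "\<forall>j. j \<ge> p \<longrightarrow> \<beta> j = 0"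
    and S_def: "S = {j. j < p \<and> \<beta> j \<noteq> 0}"
    and card_S: "card S = k"
    and k_mu: "real k < 1 / coherence n p X"
    and beta_min: "Min ((\<lambda>j. \<bar>\<beta> j\<bar>) ` S) / l2norm p \<beta>
        > 2 * coherence n p X * sqrt (real k)
          + 4 * sqrt (\<sigma>\<^sup>2 * ln (real p)) / l2norm p \<beta>"
  shows "measure (gauss_noise n \<sigma>)
      {\<eta> \<in> space (gauss_noise n \<sigma>).
        \<forall>d Shat. d \<le> p \<and>
          int d \<ge> \<lceil>sqrt (real k) /
              (Min ((\<lambda>j. \<bar>\<beta> j\<bar>) ` S) / l2norm p \<beta>
               - 2 * coherence n p X * sqrt (real k)
               - 4 * sqrt (\<sigma>\<^sup>2 * ln (real p)) / l2norm p \<beta>)\<rceil> \<and>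
          alg1_output n p X (\<lambda>i. matvec p X \<beta> i + \<eta> i) d Shat
          \<longrightarrow> S \<subseteq> Shat}
    > 1 - 2 / (real p * sqrt (2 * pi * ln (real p)))"
  proof -
  define \<mu> where "\<mu> = coherence n p X"
  define L where "L = l2norm p \<beta>"
  define bmin where "bmin = Min ((\<lambda>j. \<bar>\<beta> j\<bar>) ` S)"
  define \<tau> where "\<tau> = 2 * sqrt (\<sigma>\<^sup>2 * ln (real p))"
  define M where "M = gauss_noise n \<sigma>"
  define w where "w \<eta> = tmatvec n X (\<lambda>i. matvec p X \<beta> i + \<eta> i)" for \<eta>
  have Sp: "S \<subseteq> {..<p}" using S_def by auto
  have finS: "finite S" using Sp finite_subset by blast
  have lnp: "ln (real p) > 0" using p2 by simp
  define r where "r = sqrt (ln (real p))"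
  have r_pos: "r > 0" using lnp by (simp add: r_def)
  have r_sq: "r\<^sup>2 = ln (real p)" using lnp by (simp add: r_def)
  have tau_eq: "\<tau> = 2 * \<sigma> * r"
    using sigma_pos by (simp add: \<tau>_def r_def real_sqrt_mult)
  have tau_pos: "\<tau> > 0" using tau_eq sigma_pos r_pos by simp
  have mu_pos': "\<mu> > 0" using mu_pos by (simp add: \<mu>_def)
  have coh: "\<forall>a<p. \<forall>b<p. a \<noteq> b \<longrightarrow> \<bar>col_inner n X a b\<bar> \<le> \<mu>"
  proof (intro allI impI)
    fix a b assume ab: "a < p" "b < p" "a \<noteq> b"
    have fin: "finite {\<bar>col_inner n X a b\<bar> | a b. a < p \<and> b < p \<and> a \<noteq> b}"
      by (rule finite_subset[of _ "(\<lambda>(a,b). \<bar>col_inner n X a b\<bar>) ` ({..<p} \<times> {..<p})"]) auto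
    show "\<bar>col_inner n X a b\<bar> \<le> \<mu>" unfolding \<mu>_def coherence_def
      by (rule Max_ge[OF fin]) (use ab in blast)
  qed
  have zero: "\<forall>j<p. j \<notin> S \<longrightarrow> \<beta> j = 0" using S_def by auto
  have sumS: "(\<Sum>j<p. g (\<beta> j)) = (\<Sum>j\<in>S. g (\<beta> j))" if "g 0 = 0" for g :: "real \<Rightarrow> real"
    by (rule sum.mono_neutral_right) (use Sp zero that in auto)
  have Lsq: "L\<^sup>2 = (\<Sum>j\<in>S. (\<beta> j)\<^sup>2)" and L_nn: "L \<ge> 0"
    using sumS[of "\<lambda>x. x\<^sup>2"] by (simp_all add: L_def l2norm_def sum_nonneg)
  have Sne: "S \<noteq> {}"
  proof
    assume "S = {}"
    then have "L = 0" "k = 0" using Lsq card_S by auto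
    then show False using beta_min by (simp add: L_def)
  qed
  have kpos: "k \<ge> 1" using Sne finS card_S by (cases k) auto
  have bmin_le: "\<forall>i\<in>S. bmin \<le> \<bar>\<beta> i\<bar>" using finS by (auto simp: bmin_def)
  have "bmin \<in> (\<lambda>j. \<bar>\<beta> j\<bar>) ` S" unfolding bmin_def using finS Sne by (intro Min_in) auto
  then have bmin_pos: "bmin > 0" using S_def by auto
  have "(\<Sum>j\<in>S. bmin\<^sup>2) \<le> (\<Sum>j\<in>S. (\<beta> j)\<^sup>2)"
    using bmin_le bmin_pos by (intro sum_mono) (metis abs_ge_zero less_imp_le power2_abs power_mono)
  then have kb: "real k * bmin\<^sup>2 \<le> L\<^sup>2" using Lsq card_S by simp
  have L_pos: "L > 0"
  proof -
    have "0 < real k * bmin\<^sup>2" using kpos bmin_pos by simp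
    then have "0 < L\<^sup>2" using kb by linarith
    then show ?thesis using L_nn by (cases "L = 0") auto
  qed
  have bsk: "bmin * sqrt (real k) \<le> L"
  proof -
    have "(bmin * sqrt (real k))\<^sup>2 \<le> L\<^sup>2" using kb by (simp add: power_mult_distrib mult.commute)
    then show ?thesis using L_nn by (rule power2_le_imp_le)
  qed
  have B1: "(\<Sum>l<p. \<bar>\<beta> l\<bar>) \<le> sqrt (real k) * L"
  proof -
    have e1: "(\<Sum>l<p. \<bar>\<beta> l\<bar>) = (\<Sum>l\<in>S. \<bar>\<beta> l\<bar>)" using sumS[of abs] by simp
    have "(\<Sum>l\<in>S. \<bar>\<beta> l\<bar>)\<^sup>2 \<le> (\<Sum>l\<in>S. (\<bar>\<beta> l\<bar>)\<^sup>2) * real (card S)"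
      by (rule sum_squared_le_sum_of_squares)
    also have "\<dots> = L\<^sup>2 * real k" using Lsq card_S by simp
    also have "\<dots> = (sqrt (real k) * L)\<^sup>2" by (simp add: power_mult_distrib)
    finally have sq: "(\<Sum>l\<in>S. \<bar>\<beta> l\<bar>)\<^sup>2 \<le> (sqrt (real k) * L)\<^sup>2" .
    have nn: "0 \<le> sqrt (real k) * L" using L_nn by simp
    show ?thesis unfolding e1 by (rule power2_le_imp_le[OF sq nn])
  qed
  have four: "4 * sqrt (\<sigma>\<^sup>2 * ln (real p)) = 2 * \<tau>" by (simp add: \<tau>_def)
  have hyp: "bmin / L > 2 * \<mu> * sqrt (real k) + 2 * \<tau> / L"
    using beta_min four by (simp add: bmin_def L_def \<mu>_def)
  have gap0: "bmin > 2 * \<mu> * sqrt (real k) * L + 2 * \<tau>"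
  proof -
    have "(2 * \<mu> * sqrt (real k) + 2 * \<tau> / L) * L < bmin / L * L"
      using hyp L_pos by (intro mult_strict_right_mono) auto
    moreover have "(2 * \<mu> * sqrt (real k) + 2 * \<tau> / L) * L = 2 * \<mu> * sqrt (real k) * L + 2 * \<tau>"
      using L_pos by (simp add: field_simps)
    moreover have "bmin / L * L = bmin" using L_pos by simp
    ultimately show ?thesis by linarith
  qed
  have gap: "bmin > 2 * \<mu> * (\<Sum>l<p. \<bar>\<beta> l\<bar>) + 2 * \<tau>"
  proof -
    have "2 * \<mu> * (\<Sum>l<p. \<bar>\<beta> l\<bar>) \<le> 2 * \<mu> * (sqrt (real k) * L)"
      using B1 mu_pos' by simp
    then show ?thesis using gap0 by (simp add: mult.assoc)
  qed
  define \<delta> where "\<delta> = bmin / L - 2 * \<mu> * sqrt (real k) - 4 * sqrt (\<sigma>\<^sup>2 * ln (real p)) / L"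
  have four': "4 * sqrt (\<sigma>\<^sup>2 * ln (real p)) / L = 2 * \<tau> / L" by (simp only: four)
  have d_pos: "\<delta> > 0" using hyp four' unfolding \<delta>_def by linarith
  have d_lt: "\<delta> < bmin / L"
  proof -
    have "0 < 2 * \<mu> * sqrt (real k)" using mu_pos' kpos by simp
    moreover have "0 \<le> 4 * sqrt (\<sigma>\<^sup>2 * ln (real p)) / L" unfolding four' using L_pos tau_pos by simp
    ultimately show ?thesis by (simp add: \<delta>_def)
  qed
  have ceil_k: "int k \<le> \<lceil>sqrt (real k) / \<delta>\<rceil>"
  proof -
    have sk: "sqrt (real k) > 0" using kpos by simp
    have "real k = sqrt (real k) * sqrt (real k)" by simp
    also have "\<dots> \<le> sqrt (real k) * (L / bmin)"
      using bsk bmin_pos sk by (intro mult_left_mono) (simp_all add: field_simps)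
    also have "\<dots> = sqrt (real k) / (bmin / L)" by simp
    also have "\<dots> \<le> sqrt (real k) / \<delta>"
      using d_pos d_lt sk bmin_pos L_pos by (intro divide_left_mono) auto
    also have "\<dots> \<le> of_int \<lceil>sqrt (real k) / \<delta>\<rceil>" by (rule le_of_int_ceiling)
    finally show ?thesis by linarith
  qed
  define G where "G = {\<eta> \<in> space (gauss_noise n \<sigma>).
        \<forall>d Shat. d \<le> p \<and>
          int d \<ge> \<lceil>sqrt (real k) /
              (Min ((\<lambda>j. \<bar>\<beta> j\<bar>) ` S) / l2norm p \<beta>
               - 2 * coherence n p X * sqrt (real k)
               - 4 * sqrt (\<sigma>\<^sup>2 * ln (real p)) / l2norm p \<beta>)\<rceil> \<and>
          alg1_output n p X (\<lambda>i. matvec p X \<beta> i + \<eta> i) d Shat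
          \<longrightarrow> S \<subseteq> Shat}"
  have ceil_eq: "\<lceil>sqrt (real k) /
              (Min ((\<lambda>j. \<bar>\<beta> j\<bar>) ` S) / l2norm p \<beta>
               - 2 * coherence n p X * sqrt (real k)
               - 4 * sqrt (\<sigma>\<^sup>2 * ln (real p)) / l2norm p \<beta>)\<rceil> = \<lceil>sqrt (real k) / \<delta>\<rceil>"
    by (simp add: \<delta>_def bmin_def L_def \<mu>_def)
  define E where "E = {\<eta> \<in> space M. \<forall>j<p. \<bar>tmatvec n X \<eta> j\<bar> \<le> \<tau>}"
  have EG: "E \<subseteq> G"
  proof
    fix \<eta> assume "\<eta> \<in> E"
    then have sp: "\<eta> \<in> space M" and noise: "\<forall>j<p. \<bar>tmatvec n X \<eta> j\<bar> \<le> \<tau>" by (auto simp: E_def)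
    have sep: "\<forall>i\<in>S. \<forall>j<p. j \<notin> S \<longrightarrow> \<bar>w \<eta> j\<bar> < \<bar>w \<eta> i\<bar>"
      unfolding w_def using unit_cols coh mu_pos' zero Sp noise gap bmin_le
      by (intro ballI allI impI separation[where \<mu>=\<mu> and \<tau>=\<tau> and bmin=bmin]) auto
    have "\<forall>d Shat. d \<le> p \<and> int d \<ge> \<lceil>sqrt (real k) / \<delta>\<rceil> \<and>
          alg1_output n p X (\<lambda>i. matvec p X \<beta> i + \<eta> i) d Shat \<longrightarrow> S \<subseteq> Shat"
    proof (intro allI impI)
      fix d Shat assume H: "d \<le> p \<and> int d \<ge> \<lceil>sqrt (real k) / \<delta>\<rceil> \<and>
          alg1_output n p X (\<lambda>i. matvec p X \<beta> i + \<eta> i) d Shat"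
      then have Shp: "Shat \<subseteq> {..<p}" and cd: "card Shat = d"
        and top: "\<forall>i\<in>Shat. \<forall>j\<in>{..<p} - Shat. \<bar>w \<eta> i\<bar> \<ge> \<bar>w \<eta> j\<bar>"
        by (auto simp: alg1_output_def Let_def w_def)
      have "int k \<le> int d" using H ceil_k by linarith
      then have "card S \<le> card Shat" using cd card_S by simp
      then show "S \<subseteq> Shat" by (rule top_contains[OF sep Sp Shp _ top])
    qed
    then show "\<eta> \<in> G" using sp unfolding G_def ceil_eq M_def by blast
  qed
  have wm[measurable]: "(\<lambda>\<eta>. w \<eta> j) \<in> borel_measurable M" for j
    unfolding w_def tmatvec_def M_def gauss_noise_def by measurable
  have tm[measurable]: "(\<lambda>\<eta>. tmatvec n X \<eta> j) \<in> borel_measurable M" for j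
    unfolding tmatvec_def M_def gauss_noise_def by measurable
  have G_alt: "G = {\<eta> \<in> space M. \<forall>Sh\<in>Pow {..<p}. (card Sh \<le> p \<and> \<lceil>sqrt (real k) / \<delta>\<rceil> \<le> int (card Sh) \<and>
      (\<forall>i\<in>Sh. \<forall>j\<in>{..<p} - Sh. \<bar>w \<eta> i\<bar> \<ge> \<bar>w \<eta> j\<bar>)) \<longrightarrow> S \<subseteq> Sh}"
    unfolding G_def ceil_eq M_def alg1_output_def Let_def w_def by blast
  have G_sets: "G \<in> sets M"
    unfolding G_alt
  proof (rule sets.sets_Collect_finite_All)
    show "finite (Pow {..<p})" by simp
    fix Sh assume "Sh \<in> Pow {..<p}"
    then have fin: "finite Sh" using finite_subset by auto
    show "{\<eta> \<in> space M. (card Sh \<le> p \<and> \<lceil>sqrt (real k) / \<delta>\<rceil> \<le> int (card Sh) \<and>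
      (\<forall>i\<in>Sh. \<forall>j\<in>{..<p} - Sh. \<bar>w \<eta> i\<bar> \<ge> \<bar>w \<eta> j\<bar>)) \<longrightarrow> S \<subseteq> Sh} \<in> sets M"
    proof (intro sets.sets_Collect_imp sets.sets_Collect_conj sets.sets_Collect_const sets.sets_Collect_finite_All)
      fix i j
      show "{\<eta> \<in> space M. \<bar>w \<eta> i\<bar> \<ge> \<bar>w \<eta> j\<bar>} \<in> sets M" by measurable
    qed (use fin in auto)
  qed
  have PM: "prob_space M" unfolding M_def gauss_noise_def
    by (rule prob_space_PiM) (use sigma_pos prob_space_normal_density in auto)
  interpret prob_space M by (rule PM)
  define cst where "cst = 2 * (\<sigma>\<^sup>2 / \<tau> * normal_density 0 \<sigma> \<tau>)"
  define Bad where "Bad j = {\<eta> \<in> space M. \<bar>tmatvec n X \<eta> j\<bar> > \<tau>}" for j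
  have bad_le: "prob (Bad j) \<le> cst" if "j < p" for j
  proof -
    have D: "distributed M lborel (\<lambda>\<eta>. tmatvec n X \<eta> j) (normal_density 0 \<sigma>)"
      unfolding tmatvec_def M_def
      by (rule gauss_lin[where c="\<lambda>i. X i j", OF sigma_pos]) (use unit_cols that in auto)
    show ?thesis unfolding Bad_def cst_def by (rule tail_two[OF PM D sigma_pos tau_pos])
  qed
  have Bad_sets: "Bad j \<in> sets M" for j unfolding Bad_def by measurable
  have E_eq: "E = space M - (\<Union>j<p. Bad j)" by (auto simp: E_def Bad_def not_less)
  have "prob (\<Union>j<p. Bad j) \<le> (\<Sum>j<p. prob (Bad j))"
    by (rule finite_measure_subadditive_finite) (use Bad_sets in auto)
  also have "\<dots> \<le> (\<Sum>j<p. cst)" by (rule sum_mono) (use bad_le in auto)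
  also have "\<dots> = real p * cst" by simp
  finally have U_le: "prob (\<Union>j<p. Bad j) \<le> real p * cst" .
  have "prob E = 1 - prob (\<Union>j<p. Bad j)" unfolding E_eq
    by (rule prob_compl) (use Bad_sets in auto)
  then have E_ge: "prob E \<ge> 1 - real p * cst" using U_le by linarith
  have G_ge: "prob G \<ge> prob E" by (rule finite_measure_mono[OF EG G_sets])
  have pp: "real p > 0" using p2 by simp
  have ex: "exp (- (\<tau> - 0)\<^sup>2 / (2 * \<sigma>\<^sup>2)) = 1 / (real p * real p)"
  proof -
    have "- (\<tau> - 0)\<^sup>2 / (2 * \<sigma>\<^sup>2) = - (ln (real p) + ln (real p))"
      using tau_eq r_sq sigma_pos by (simp add: field_simps power_mult_distrib)
    moreover have "exp (ln (real p) + ln (real p)) = real p * real p" using pp by (simp only: exp_add exp_ln)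
    moreover have "exp (- (ln (real p) + ln (real p))) = inverse (exp (ln (real p) + ln (real p)))" by (rule exp_minus)
    ultimately show ?thesis by (simp only: inverse_eq_divide)
  qed
  have s1: "sqrt (2 * pi * \<sigma>\<^sup>2) = sqrt (2 * pi) * \<sigma>" using sigma_pos by (simp add: real_sqrt_mult)
  have s2: "sqrt (2 * pi * ln (real p)) = sqrt (2 * pi) * r" by (simp add: r_def real_sqrt_mult)
  have pc: "real p * cst = 1 / (real p * sqrt (2 * pi * ln (real p)))"
  proof -
    have nd: "normal_density 0 \<sigma> \<tau> = 1 / (sqrt (2 * pi) * \<sigma>) * (1 / (real p * real p))"
      unfolding normal_density_def ex s1 by simp
    show ?thesis unfolding cst_def nd unfolding s2 tau_eq using sigma_pos r_pos pp
      by (simp add: field_simps power2_eq_square)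
  qed
  have pos: "real p * sqrt (2 * pi * ln (real p)) > 0" using pp lnp by simp
  have "1 - 2 / (real p * sqrt (2 * pi * ln (real p))) < 1 - real p * cst"
    unfolding pc using pos by (simp add: divide_strict_right_mono)
  also have "\<dots> \<le> prob G" using E_ge G_ge by linarith
  finally have final: "prob G > 1 - 2 / (real p * sqrt (2 * pi * ln (real p)))" .
  then show ?thesis unfolding G_def M_def .
qed

end
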